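(* Let $\mathfrak{A}$ be a commutative $\mathbb{Q}$-algebra, $A$ a set of non-commutative letters, $\mathfrak{h}^1$ the non-commutative polynomial algebra over $\mathfrak{A}$ generated by $A$, and $\mathfrak{z}\subset\mathfrak{h}^1$ the $\mathfrak{A}$-submodule spanned by $A$, equipped with a commutative (not necessarily unital) $\mathfrak{A}$-algebra product $\circ$. Let $r$ be a variable and $\mathrm{S}^r$ the map on $\mathfrak{h}^1[r]$ described in the context. Then for any $a_1,a_2,\ldots,a_n\in\mathfrak{z}$, $$\mathrm{S}^r(a_1a_2\cdots a_n)=\sum_{i=1}^n r^{i-1}(a_1\circ a_2\circ\cdots\circ a_i)\,\mathrm{S}^r(a_{i+1}\cdots a_n).$$ In particular, for any positive integer $n$ and any $a\in\mathfrak{z}$, $$\mathrm{S}^r(a^n)=\sum_{i=1}^n r^{i-1}a^{\circ i}\,\mathrm{S}^r(a^{n-i}).$$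
   Context: The product $\circ$ on $\mathfrak{z}$ gives an action of $\mathfrak{z}$ on $\mathfrak{h}^1$ (and on $\mathfrak{h}^1[r]$, $r$-linearly) defined by $\mathfrak{A}$-linearity and the rules $a\circ 1_w=0$ and $a\circ(bw)=(a\circ b)w$ for $a,b\in A$ and any word $w$, where $1_w$ is the empty word. The map $\mathrm{S}^r$ is the $\mathfrak{A}[r]$-linear map on $\mathfrak{h}^1[r]$ determined by $\mathrm{S}^r(1_w)=1_w$ and $\mathrm{S}^r(aw)=a\,\mathrm{S}^r(w)+r\,a\circ\mathrm{S}^r(w)$ for all $a\in A$ and words $w$. Juxtaposition denotes the concatenation product of $\mathfrak{h}^1$; $a^n$ is the $n$-fold concatenation power ($a^0=1_w$), and $a^{\circ i}=a\circ\cdots\circ a$ ($i$ factors). *)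

theory Defs
  imports "HOL-Computational_Algebra.Polynomial"
begin

text \<open>
  Letters are the elements of a type 'l (the alphabet A).  The coefficient
  ring is a commutative ring 'k (the Q-algebra).  An element of h1[r] is represented
  by its coefficient function on words: a map from words ('l list) to polynomials
  in r over 'k ('k poly); genuine elements are finitely supported.  An element of
  the span z of A is represented by its coefficient function 'l => 'k (finitely
  supported).  Juxtaposition (concatenation product) is hcat.
\<close>

type_synonym ('l, 'k) hr = "'l list \<Rightarrow> 'k poly"

definition fsupp :: "('a \<Rightarrow> 'b::zero) \<Rightarrow> bool" where
  "fsupp f \<longleftrightarrow> finite {x. f x \<noteq> 0}"

definition wrd :: "'l list \<Rightarrow> ('l, 'k::comm_ring_1) hr" where
  "wrd w = (\<lambda>v. if v = w then 1 else 0)"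

definition lett :: "('l \<Rightarrow> 'k::comm_ring_1) \<Rightarrow> ('l, 'k) hr" where
  "lett a = (\<lambda>v. case v of [x] \<Rightarrow> [:a x:] | _ \<Rightarrow> 0)"

definition dlt :: "'l \<Rightarrow> 'l \<Rightarrow> 'k::comm_ring_1" where
  "dlt x = (\<lambda>y. if y = x then 1 else 0)"

definition hcat :: "('l, 'k::comm_ring_1) hr \<Rightarrow> ('l, 'k) hr \<Rightarrow> ('l, 'k) hr" where
  "hcat F G = (\<lambda>w. \<Sum>i\<le>length w. F (take i w) * G (drop i w))"

definition hplus :: "('l, 'k::comm_ring_1) hr \<Rightarrow> ('l, 'k) hr \<Rightarrow> ('l, 'k) hr" where
  "hplus F G = (\<lambda>w. F w + G w)"

definition hsmult :: "'k::comm_ring_1 poly \<Rightarrow> ('l, 'k) hr \<Rightarrow> ('l, 'k) hr" where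
  "hsmult p F = (\<lambda>w. p * F w)"

definition hsum :: "('i \<Rightarrow> ('l, 'k::comm_ring_1) hr) \<Rightarrow> 'i set \<Rightarrow> ('l, 'k) hr" where
  "hsum f I = (\<lambda>w. \<Sum>i\<in>I. f i w)"

text \<open>'k[r]-linear extension of a map defined on words (for finitely supported F).\<close>
definition hlin :: "('l list \<Rightarrow> ('l, 'k::comm_ring_1) hr) \<Rightarrow> ('l, 'k) hr \<Rightarrow> ('l, 'k) hr" where
  "hlin T F = (\<lambda>v. \<Sum>w\<in>{w. F w \<noteq> 0}. F w * T w v)"

abbreviation rvar :: "'k::comm_ring_1 poly" where
  "rvar \<equiv> [:0, 1:]"

fun act_w :: "(('l \<Rightarrow> 'k) \<Rightarrow> ('l \<Rightarrow> 'k) \<Rightarrow> ('l \<Rightarrow> 'k)) \<Rightarrow> ('l \<Rightarrow> 'k::comm_ring_1)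
                \<Rightarrow> 'l list \<Rightarrow> ('l, 'k) hr" where
  "act_w circ a [] = (\<lambda>_. 0)"
| "act_w circ a (b # w) = hcat (lett (circ a (dlt b))) (wrd w)"

definition act :: "(('l \<Rightarrow> 'k) \<Rightarrow> ('l \<Rightarrow> 'k) \<Rightarrow> ('l \<Rightarrow> 'k)) \<Rightarrow> ('l \<Rightarrow> 'k::comm_ring_1)
                \<Rightarrow> ('l, 'k) hr \<Rightarrow> ('l, 'k) hr" where
  "act circ a F = hlin (act_w circ a) F"

text \<open>S^r on words: S(1) = 1, S(a w) = a S(w) + r a o S(w).\<close>
primrec S_w :: "(('l \<Rightarrow> 'k) \<Rightarrow> ('l \<Rightarrow> 'k) \<Rightarrow> ('l \<Rightarrow> 'k)) \<Rightarrow> 'l list \<Rightarrow> ('l, 'k::comm_ring_1) hr" where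
  "S_w circ [] = wrd []"
| "S_w circ (b # w) = hplus (hcat (lett (dlt b)) (S_w circ w))
                            (hsmult rvar (act circ (dlt b) (S_w circ w)))"

definition Sr :: "(('l \<Rightarrow> 'k) \<Rightarrow> ('l \<Rightarrow> 'k) \<Rightarrow> ('l \<Rightarrow> 'k)) \<Rightarrow> ('l, 'k::comm_ring_1) hr \<Rightarrow> ('l, 'k) hr" where
  "Sr circ F = hlin (S_w circ) F"

definition catprod :: "('l \<Rightarrow> 'k::comm_ring_1) list \<Rightarrow> ('l, 'k) hr" where
  "catprod as = foldr (\<lambda>a F. hcat (lett a) F) as (wrd [])"

fun circ_chain :: "(('l \<Rightarrow> 'k) \<Rightarrow> ('l \<Rightarrow> 'k) \<Rightarrow> ('l \<Rightarrow> 'k)) \<Rightarrow> ('l \<Rightarrow> 'k::zero) list \<Rightarrow> ('l \<Rightarrow> 'k)" where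
  "circ_chain circ [] = (\<lambda>_. 0)"
| "circ_chain circ [a] = a"
| "circ_chain circ (a # b # as) = circ a (circ_chain circ (b # as))"

definition comm_circ :: "(('l \<Rightarrow> 'k) \<Rightarrow> ('l \<Rightarrow> 'k) \<Rightarrow> ('l \<Rightarrow> 'k::comm_ring_1)) \<Rightarrow> bool" where
  "comm_circ circ \<longleftrightarrow>
    (\<forall>a b. fsupp a \<longrightarrow> fsupp b \<longrightarrow> fsupp (circ a b)) \<and>
    (\<forall>a b. fsupp a \<longrightarrow> fsupp b \<longrightarrow> circ a b = circ b a) \<and>
    (\<forall>a b c. fsupp a \<longrightarrow> fsupp b \<longrightarrow> fsupp c \<longrightarrow> circ (circ a b) c = circ a (circ b c)) \<and>
    (\<forall>a b c. fsupp a \<longrightarrow> fsupp b \<longrightarrow> fsupp c \<longrightarrow>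
        circ (\<lambda>x. a x + b x) c = (\<lambda>x. circ a c x + circ b c x)) \<and>
    (\<forall>k a b. fsupp a \<longrightarrow> fsupp b \<longrightarrow> circ (\<lambda>x. k * a x) b = (\<lambda>x. k * circ a b x))"

end

theory Submission
  imports Defs
begin

lemma const_add: "[:a + b:] = [:a:] + [:b:]"
  by simp

lemma const_sum: "finite I \<Longrightarrow> [:\<Sum>i\<in>I. f i:] = (\<Sum>i\<in>I. [:f i:])"
  by (induction I rule: finite_induct) (simp_all add: const_add del: add_pCons)

lemma const_mult: "[:(a::'k::comm_ring_1) * b:] = [:a:] * [:b:]"
  by (simp add: mult_to_poly)

lemma smult_sum2: "smult a (\<Sum>i \<in> S. f i) = (\<Sum>i \<in> S. smult a (f i))"
  by (induct S rule: infinite_finite_induct, auto simp: smult_add_right)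

definition Lc :: "('l \<Rightarrow> 'k::comm_ring_1) \<Rightarrow> ('l,'k) hr \<Rightarrow> ('l,'k) hr" where
  "Lc c G = (\<lambda>v. case v of [] \<Rightarrow> 0 | y#u \<Rightarrow> [:c y:] * G u)"

lemma Lc_Nil[simp]: "Lc c G [] = 0" and Lc_Cons[simp]: "Lc c G (y#u) = [:c y:] * G u"
  by (simp_all add: Lc_def)

lemma hcat_lett: "hcat (lett c) G = Lc c G"
proof (rule ext)
  fix v show "hcat (lett c) G v = Lc c G v"
  proof (cases v)
    case Nil then show ?thesis by (simp add: hcat_def lett_def Lc_def)
  next
    case (Cons y u)
    have "hcat (lett c) G v = (\<Sum>i\<le>Suc (length u). lett c (take i (y#u)) * G (drop i (y#u)))"
      by (simp add: hcat_def Cons)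
    also have "\<dots> = lett c (take 0 (y#u)) * G (drop 0 (y#u)) + (\<Sum>i\<le>length u. lett c (y # take i u) * G (drop i u))"
      by (subst sum.atMost_Suc_shift) simp
    also have "\<dots> = (\<Sum>i\<le>length u. lett c (y # take i u) * G (drop i u))"
      by (simp add: lett_def)
    also have "\<dots> = lett c (y # take 0 u) * G (drop 0 u) + (\<Sum>i\<in>{..length u} - {0}. lett c (y # take i u) * G (drop i u))"
      by (subst sum.remove[of _ 0]) auto
    also have "(\<Sum>i\<in>{..length u} - {0}. lett c (y # take i u) * G (drop i u)) = 0"
    proof (rule sum.neutral, rule ballI)
      fix i assume "i \<in> {..length u} - {0}"
      then have "take i u \<noteq> []" by auto
      then obtain z zs where "take i u = z # zs" by (metis neq_Nil_conv)
      then show "lett c (y # take i u) * G (drop i u) = 0" by (simp add: lett_def)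
    qed
    finally show ?thesis by (simp add: Cons lett_def)
  qed
qed

lemma catprod_Cons: "catprod (a # as) = Lc a (catprod as)"
  by (simp add: catprod_def hcat_lett)

lemma hlin_superset:
  assumes "finite W" "{w. F w \<noteq> 0} \<subseteq> W"
  shows "hlin T F v = (\<Sum>w\<in>W. F w * T w v)"
  unfolding hlin_def using assms by (intro sum.mono_neutral_left) auto

lemma hlin_wrd: "hlin T (wrd w) = T w"
proof (rule ext)
  fix v show "hlin T (wrd w) v = T w v"
    by (subst hlin_superset[of "{w}"]) (auto simp: wrd_def)
qed

lemma sum_supp_aux: fixes H :: "'i \<Rightarrow> 'a \<Rightarrow> 'b::comm_ring_1" shows "{v. (\<Sum>u\<in>J. p u * H u v) \<noteq> 0} \<subseteq> (\<Union>u\<in>J. {v. H u v \<noteq> 0})"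
proof (rule subsetI, rule ccontr)
  fix v assume a: "v \<in> {v. (\<Sum>u\<in>J. p u * H u v) \<noteq> 0}" "v \<notin> (\<Union>u\<in>J. {v. H u v \<noteq> 0})"
  then have "\<forall>u\<in>J. H u v = 0" by auto
  then show False using a(1) by simp
qed

lemma fsupp_sum:
  fixes H :: "'i \<Rightarrow> 'a \<Rightarrow> 'b::comm_ring_1"
  assumes "finite J" "\<And>u. u \<in> J \<Longrightarrow> fsupp (H u)"
  shows "fsupp (\<lambda>v. \<Sum>u\<in>J. p u * H u v)"
proof -
  have "finite (\<Union>u\<in>J. {v. H u v \<noteq> 0})" using assms by (auto simp: fsupp_def)
  then show ?thesis unfolding fsupp_def using sum_supp_aux by (rule finite_subset[rotated])
qed

lemma hlin_lin:
  assumes "finite J" "\<And>u. u \<in> J \<Longrightarrow> fsupp (H u)"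
  shows "hlin T (\<lambda>v. \<Sum>u\<in>J. p u * H u v) v = (\<Sum>u\<in>J. p u * hlin T (H u) v)"
proof -
  define W where "W = (\<Union>u\<in>J. {v. H u v \<noteq> 0})"
  have fW: "finite W" using assms by (auto simp: fsupp_def W_def)
  have "hlin T (\<lambda>v. \<Sum>u\<in>J. p u * H u v) v = (\<Sum>w\<in>W. (\<Sum>u\<in>J. p u * H u w) * T w v)"
    by (rule hlin_superset[OF fW]) (unfold W_def, rule sum_supp_aux)
  also have "\<dots> = (\<Sum>u\<in>J. p u * (\<Sum>w\<in>W. H u w * T w v))"
    by (simp add: sum_distrib_right sum_distrib_left mult.assoc)
       (rule sum.swap)
  also have "\<dots> = (\<Sum>u\<in>J. p u * hlin T (H u) v)"
    by (intro sum.cong refl arg_cong2[where f="(*)"] hlin_superset[symmetric] fW) (auto simp: W_def)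
  finally show ?thesis .
qed

lemma hlin_fsupp:
  assumes "fsupp F" "\<And>w. fsupp (T w)"
  shows "fsupp (hlin T F)"
  unfolding hlin_def using fsupp_sum[of "{w. F w \<noteq> 0}" T F] assms by (simp add: fsupp_def)

lemma hlin_first:
  "hlin (\<lambda>w v. \<Sum>b\<in>I. k b * T b w v) H v = (\<Sum>b\<in>I. k b * hlin (T b) H v)"
  unfolding hlin_def by (simp add: sum_distrib_left mult.left_commute) (rule sum.swap)

lemma fsupp_Lc:
  assumes "fsupp c" "fsupp G" shows "fsupp (Lc c G)"
proof -
  have "{v. Lc c G v \<noteq> 0} \<subseteq> (\<lambda>(b,u). b#u) ` ({b. c b \<noteq> 0} \<times> {u. G u \<noteq> 0})"
  proof
    fix v assume "v \<in> {v. Lc c G v \<noteq> 0}"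
    then show "v \<in> (\<lambda>(b,u). b#u) ` ({b. c b \<noteq> 0} \<times> {u. G u \<noteq> 0})"
      by (cases v) auto
  qed
  then show ?thesis using assms unfolding fsupp_def by (meson finite_SigmaI finite_imageI finite_subset)
qed

lemma fsupp_wrd: "fsupp (wrd w)" by (simp add: fsupp_def wrd_def)

lemma fsupp_dlt: "fsupp (dlt b)" by (simp add: fsupp_def dlt_def)

lemma fsupp_zero: "fsupp (\<lambda>x. 0)" by (simp add: fsupp_def)

lemma fsupp_hplus: "fsupp F \<Longrightarrow> fsupp G \<Longrightarrow> fsupp (hplus F G)"
  unfolding fsupp_def hplus_def
  by (rule finite_subset[of _ "{w. F w \<noteq> 0} \<union> {w. G w \<noteq> 0}"]) auto

lemma fsupp_scale: "fsupp (f::'a \<Rightarrow> 'b::comm_ring_1) \<Longrightarrow> fsupp (\<lambda>x. k * f x)"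
  unfolding fsupp_def by (rule finite_subset[of _ "{x. f x \<noteq> 0}"]) auto

lemma fsupp_hsmult: "fsupp F \<Longrightarrow> fsupp (hsmult p F)"
  unfolding fsupp_def hsmult_def
  by (rule finite_subset[of _ "{w. F w \<noteq> 0}"]) auto

lemma decomp:
  assumes "fsupp c"
  shows "c = (\<lambda>x. \<Sum>b\<in>{b. c b \<noteq> 0}. c b * dlt b x)"
proof (rule ext)
  fix x
  have "(\<Sum>b\<in>{b. c b \<noteq> 0}. c b * dlt b x) = (\<Sum>b\<in>{b. c b \<noteq> 0}. if b = x then c b else 0)"
    by (intro sum.cong) (auto simp: dlt_def)
  also have "\<dots> = c x" using assms by (simp add: sum.delta' fsupp_def)
  finally show "c x = (\<Sum>b\<in>{b. c b \<noteq> 0}. c b * dlt b x)" by simp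
qed

lemma Lc_expand:
  assumes "fsupp c" "fsupp G"
  shows "Lc c G = (\<lambda>v. \<Sum>p\<in>{b. c b \<noteq> 0} \<times> {u. G u \<noteq> 0}. ([:c (fst p):] * G (snd p)) * wrd (fst p # snd p) v)"
proof (rule ext)
  fix v show "Lc c G v = (\<Sum>p\<in>{b. c b \<noteq> 0} \<times> {u. G u \<noteq> 0}. ([:c (fst p):] * G (snd p)) * wrd (fst p # snd p) v)"
  proof (cases v)
    case Nil then show ?thesis by (simp add: wrd_def)
  next
    case (Cons y v')
    have "(\<Sum>p\<in>{b. c b \<noteq> 0} \<times> {u. G u \<noteq> 0}. ([:c (fst p):] * G (snd p)) * wrd (fst p # snd p) v)
        = (\<Sum>p\<in>{b. c b \<noteq> 0} \<times> {u. G u \<noteq> 0}. if p = (y, v') then [:c (fst p):] * G (snd p) else 0)"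
      by (intro sum.cong) (auto simp: wrd_def Cons)
    also have "\<dots> = Lc c G v"
      using assms by (subst sum.delta) (auto simp: fsupp_def Cons)
    finally show ?thesis by simp
  qed
qed

lemma hlin_Lc:
  assumes "fsupp c" "fsupp G"
  shows "hlin T (Lc c G) v = (\<Sum>p\<in>{b. c b \<noteq> 0} \<times> {u. G u \<noteq> 0}. ([:c (fst p):] * G (snd p)) * T (fst p # snd p) v)"
proof -
  have "hlin T (Lc c G) v = (\<Sum>p\<in>{b. c b \<noteq> 0} \<times> {u. G u \<noteq> 0}. ([:c (fst p):] * G (snd p)) * hlin T (wrd (fst p # snd p)) v)"
    unfolding Lc_expand[OF assms] using assms by (intro hlin_lin) (auto simp: fsupp_wrd[unfolded fsupp_def] fsupp_def)
  then show ?thesis by (simp add: hlin_wrd)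
qed

context
  fixes circ :: "('l \<Rightarrow> 'k::comm_ring_1) \<Rightarrow> ('l \<Rightarrow> 'k) \<Rightarrow> ('l \<Rightarrow> 'k)"
  assumes circ: "comm_circ circ"
begin

lemma cfs: "fsupp a \<Longrightarrow> fsupp b \<Longrightarrow> fsupp (circ a b)"
  using circ unfolding comm_circ_def by blast
lemma ccomm: "fsupp a \<Longrightarrow> fsupp b \<Longrightarrow> circ a b = circ b a"
  using circ unfolding comm_circ_def by blast
lemma cassoc: "fsupp a \<Longrightarrow> fsupp b \<Longrightarrow> fsupp c \<Longrightarrow> circ (circ a b) c = circ a (circ b c)"
  using circ unfolding comm_circ_def by blast
lemma cadd: "fsupp a \<Longrightarrow> fsupp b \<Longrightarrow> fsupp c \<Longrightarrow> circ (\<lambda>x. a x + b x) c = (\<lambda>x. circ a c x + circ b c x)"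
  using circ unfolding comm_circ_def by blast
lemma chom: "fsupp a \<Longrightarrow> fsupp b \<Longrightarrow> circ (\<lambda>x. k * a x) b = (\<lambda>x. k * circ a b x)"
  using circ unfolding comm_circ_def by blast

lemma czero: "fsupp b \<Longrightarrow> circ (\<lambda>x. 0) b = (\<lambda>x. 0)"
  using chom[of "\<lambda>x. 0" b 0] by (simp add: fsupp_zero)

lemma csum:
  assumes "finite I" "\<And>i. i \<in> I \<Longrightarrow> fsupp (f i)" "fsupp b"
  shows "circ (\<lambda>x. \<Sum>i\<in>I. k i * f i x) b = (\<lambda>x. \<Sum>i\<in>I. k i * circ (f i) b x)"
  using assms
proof (induction I rule: finite_induct)
  case empty then show ?case by (simp add: czero)
next
  case (insert j I)
  have "circ (\<lambda>x. \<Sum>i\<in>insert j I. k i * f i x) b = circ (\<lambda>x. k j * f j x + (\<Sum>i\<in>I. k i * f i x)) b"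
    using insert by simp
  also have "\<dots> = (\<lambda>x. circ (\<lambda>x. k j * f j x) b x + circ (\<lambda>x. \<Sum>i\<in>I. k i * f i x) b x)"
    using insert by (intro cadd fsupp_sum fsupp_scale) auto
  also have "\<dots> = (\<lambda>x. \<Sum>i\<in>insert j I. k i * circ (f i) b x)"
    using insert by (simp add: chom)
  finally show ?case .
qed

lemma cright:
  assumes "fsupp a" "fsupp c"
  shows "circ a c y = (\<Sum>b\<in>{b. c b \<noteq> 0}. c b * circ a (dlt b) y)"
proof -
  have "circ a c = circ c a" using assms by (rule ccomm)
  also have "\<dots> = circ (\<lambda>x. \<Sum>b\<in>{b. c b \<noteq> 0}. c b * dlt b x) a"
    using decomp[OF assms(2)] by simp
  also have "\<dots> = (\<lambda>x. \<Sum>b\<in>{b. c b \<noteq> 0}. c b * circ (dlt b) a x)"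
    using assms by (intro csum) (auto simp: fsupp_def fsupp_dlt[unfolded fsupp_def])
  finally show ?thesis using assms by (simp add: ccomm fsupp_dlt)
qed


lemma fsupp_act_w: "fsupp a \<Longrightarrow> fsupp (act_w circ a w)"
  by (cases w) (simp_all add: hcat_lett fsupp_zero fsupp_Lc cfs fsupp_dlt fsupp_wrd)

lemma fsupp_act: "fsupp a \<Longrightarrow> fsupp H \<Longrightarrow> fsupp (act circ a H)"
  unfolding act_def by (intro hlin_fsupp fsupp_act_w)

lemma act_Nil: "act circ a H [] = 0"
proof -
  have "\<And>w. act_w circ a w [] = 0" by (case_tac w) (simp_all add: hcat_lett)
  then show ?thesis by (simp add: act_def hlin_def)
qed

lemma fsupp_S_w: "fsupp (S_w circ w)"
  by (induction w) (simp_all add: fsupp_wrd fsupp_hplus fsupp_hsmult fsupp_act hcat_lett fsupp_Lc fsupp_dlt)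

lemma fsupp_Sr: "fsupp F \<Longrightarrow> fsupp (Sr circ F)"
  unfolding Sr_def by (intro hlin_fsupp fsupp_S_w)

lemma act_second:
  assumes "finite J" "\<And>u. u \<in> J \<Longrightarrow> fsupp (H u)"
  shows "act circ a (\<lambda>v. \<Sum>u\<in>J. p u * H u v) v = (\<Sum>u\<in>J. p u * act circ a (H u) v)"
  unfolding act_def using assms by (rule hlin_lin)

lemma act_first:
  assumes "finite I" "\<And>i. i \<in> I \<Longrightarrow> fsupp (f i)"
  shows "act circ (\<lambda>x. \<Sum>i\<in>I. k i * f i x) H v = (\<Sum>i\<in>I. [:k i:] * act circ (f i) H v)"
proof -
  have eq: "act_w circ (\<lambda>x. \<Sum>i\<in>I. k i * f i x) = (\<lambda>w v. \<Sum>i\<in>I. [:k i:] * act_w circ (f i) w v)"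
  proof (intro ext)
    fix w v
    show "act_w circ (\<lambda>x. \<Sum>i\<in>I. k i * f i x) w v = (\<Sum>i\<in>I. [:k i:] * act_w circ (f i) w v)"
    proof (cases w)
      case Nil then show ?thesis by simp
    next
      case (Cons b w')
      show ?thesis
      proof (cases v)
        case Nil then show ?thesis using \<open>w = b # w'\<close> by (simp add: hcat_lett)
      next
        case (Cons y u)
        have "circ (\<lambda>x. \<Sum>i\<in>I. k i * f i x) (dlt b) y = (\<Sum>i\<in>I. k i * circ (f i) (dlt b) y)"
          using assms by (subst csum) (auto simp: fsupp_dlt)
        then show ?thesis using \<open>w = b # w'\<close> Cons
          by (simp add: hcat_lett smult_sum mult.commute)
      qed
    qed
  qed
  show ?thesis unfolding act_def eq by (rule hlin_first)
qed

lemma act_Lc: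
  assumes "fsupp a" "fsupp c" "fsupp G"
  shows "act circ a (Lc c G) = Lc (circ a c) G"
proof (rule ext)
  fix v
  show "act circ a (Lc c G) v = Lc (circ a c) G v"
  proof (cases v)
    case Nil then show ?thesis by (simp add: act_Nil)
  next
    case (Cons y v')
    have "act circ a (Lc c G) v = (\<Sum>p\<in>{b. c b \<noteq> 0} \<times> {u. G u \<noteq> 0}. ([:c (fst p):] * G (snd p)) * act_w circ a (fst p # snd p) v)"
      unfolding act_def by (rule hlin_Lc[OF assms(2,3)])
    also have "\<dots> = (\<Sum>b\<in>{b. c b \<noteq> 0}. \<Sum>u\<in>{u. G u \<noteq> 0}. smult (c b * circ a (dlt b) y) (G u * wrd u v'))"
      by (subst sum.cartesian_product) (simp add: hcat_lett Cons case_prod_beta mult.commute)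
    also have "\<dots> = smult (\<Sum>b\<in>{b. c b \<noteq> 0}. c b * circ a (dlt b) y) (\<Sum>u\<in>{u. G u \<noteq> 0}. G u * wrd u v')"
      by (simp add: smult_sum smult_sum2) (rule sum.swap)
    also have "(\<Sum>u\<in>{u. G u \<noteq> 0}. G u * wrd u v') = G v'"
    proof -
      have "(\<Sum>u\<in>{u. G u \<noteq> 0}. G u * wrd u v') = (\<Sum>u\<in>{u. G u \<noteq> 0}. if v' = u then G u else 0)"
        by (intro sum.cong) (auto simp: wrd_def)
      also have "\<dots> = G v'" using assms(3) by (subst sum.delta') (auto simp: fsupp_def)
      finally show ?thesis .
    qed
    also have "(\<Sum>b\<in>{b. c b \<noteq> 0}. c b * circ a (dlt b) y) = circ a c y"
      using assms by (simp add: cright)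
    finally show ?thesis by (simp add: Cons)
  qed
qed

lemma Sr_G: "Sr circ G = (\<lambda>v. \<Sum>u\<in>{u. G u \<noteq> 0}. G u * S_w circ u v)"
  by (simp add: Sr_def hlin_def)

lemma Sr_Lc:
  assumes "fsupp c" "fsupp G"
  shows "Sr circ (Lc c G) = hplus (Lc c (Sr circ G)) (hsmult rvar (act circ c (Sr circ G)))"
proof (rule ext)
  fix v
  define P where "P = {b. c b \<noteq> 0} \<times> {u. G u \<noteq> 0}"
  have fP: "finite P" using assms by (simp add: P_def fsupp_def)
  have "Sr circ (Lc c G) v = (\<Sum>p\<in>P. ([:c (fst p):] * G (snd p)) * S_w circ (fst p # snd p) v)"
    unfolding Sr_def P_def by (rule hlin_Lc[OF assms])
  also have "\<dots> = (\<Sum>p\<in>P. ([:c (fst p):] * G (snd p)) * Lc (dlt (fst p)) (S_w circ (snd p)) v)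
       + rvar * (\<Sum>p\<in>P. ([:c (fst p):] * G (snd p)) * act circ (dlt (fst p)) (S_w circ (snd p)) v)"
    by (simp add: hplus_def hsmult_def hcat_lett sum.distrib sum_distrib_left distrib_left mult_ac)
  also have "(\<Sum>p\<in>P. ([:c (fst p):] * G (snd p)) * act circ (dlt (fst p)) (S_w circ (snd p)) v)
      = act circ c (Sr circ G) v"
  proof -
    have "act circ c (Sr circ G) v = act circ (\<lambda>x. \<Sum>b\<in>{b. c b \<noteq> 0}. c b * dlt b x) (Sr circ G) v"
      using decomp[OF assms(1)] by simp
    also have "\<dots> = (\<Sum>b\<in>{b. c b \<noteq> 0}. [:c b:] * act circ (dlt b) (Sr circ G) v)"
      using assms by (intro act_first) (auto simp: fsupp_def fsupp_dlt[unfolded fsupp_def])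
    also have "\<dots> = (\<Sum>b\<in>{b. c b \<noteq> 0}. [:c b:] * (\<Sum>u\<in>{u. G u \<noteq> 0}. G u * act circ (dlt b) (S_w circ u) v))"
      unfolding Sr_G using assms by (subst act_second) (auto simp: fsupp_def fsupp_S_w[unfolded fsupp_def])
    also have "\<dots> = (\<Sum>b\<in>{b. c b \<noteq> 0}. \<Sum>u\<in>{u. G u \<noteq> 0}. ([:c b:] * G u) * act circ (dlt b) (S_w circ u) v)"
      by (simp add: sum_distrib_left mult.assoc)
    also have "\<dots> = (\<Sum>p\<in>P. ([:c (fst p):] * G (snd p)) * act circ (dlt (fst p)) (S_w circ (snd p)) v)"
      unfolding P_def by (subst sum.cartesian_product) (simp add: case_prod_beta)
    finally show ?thesis by simp
  qed
  also have "(\<Sum>p\<in>P. ([:c (fst p):] * G (snd p)) * Lc (dlt (fst p)) (S_w circ (snd p)) v)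
      = Lc c (Sr circ G) v"
  proof (cases v)
    case Nil then show ?thesis by simp
  next
    case (Cons y v')
    have "(\<Sum>p\<in>P. ([:c (fst p):] * G (snd p)) * Lc (dlt (fst p)) (S_w circ (snd p)) v)
        = (\<Sum>b\<in>{b. c b \<noteq> 0}. \<Sum>u\<in>{u. G u \<noteq> 0}. smult (c b * dlt b y) (G u * S_w circ u v'))"
      unfolding P_def by (subst sum.cartesian_product) (simp add: case_prod_beta Cons mult.commute)
    also have "\<dots> = smult (\<Sum>b\<in>{b. c b \<noteq> 0}. c b * dlt b y) (\<Sum>u\<in>{u. G u \<noteq> 0}. G u * S_w circ u v')"
      by (simp add: smult_sum smult_sum2) (rule sum.swap)
    also have "(\<Sum>b\<in>{b. c b \<noteq> 0}. c b * dlt b y) = c y"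
      using fun_cong[OF decomp[OF assms(1)], of y] by simp
    finally show ?thesis by (simp add: Cons Sr_G)
  qed
  finally show "Sr circ (Lc c G) v = hplus (Lc c (Sr circ G)) (hsmult rvar (act circ c (Sr circ G))) v"
    by (simp add: hplus_def hsmult_def)
qed

lemma fsupp_catprod: "\<forall>a\<in>set as. fsupp a \<Longrightarrow> fsupp (catprod as)"
  by (induction as) (simp_all add: catprod_Cons fsupp_Lc fsupp_wrd, simp add: catprod_def fsupp_wrd)

lemma fsupp_chain: "\<forall>a\<in>set as. fsupp a \<Longrightarrow> fsupp (circ_chain circ as)"
proof (induction as)
  case Nil then show ?case by (simp add: fsupp_zero)
next
  case (Cons a as) then show ?case by (cases as) (simp_all add: cfs)
qed

lemma act_wrd_Nil: "act circ a (wrd []) = (\<lambda>_. 0)"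
  unfolding act_def hlin_wrd by simp

lemma Sr_wrd_Nil: "Sr circ (wrd []) = wrd []"
  unfolding Sr_def hlin_wrd by simp

lemma main:
  "as \<noteq> [] \<Longrightarrow> \<forall>a\<in>set as. fsupp a \<Longrightarrow>
   Sr circ (catprod as) =
   hsum (\<lambda>i. hsmult (rvar ^ (i - 1)) (Lc (circ_chain circ (take i as)) (Sr circ (catprod (drop i as)))))
        {1..length as}"
proof (induction as)
  case Nil then show ?case by simp
next
  case (Cons a as')
  have fa: "fsupp a" and fas: "\<forall>a\<in>set as'. fsupp a" using Cons.prems by auto
  define X where "X = Sr circ (catprod as')"
  have Sr1: "Sr circ (catprod (a # as')) = hplus (Lc a X) (hsmult rvar (act circ a X))"
    unfolding catprod_Cons X_def by (rule Sr_Lc[OF fa fsupp_catprod[OF fas]])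
  show ?case
  proof (cases "as' = []")
    case True
    show ?thesis using Sr1 unfolding X_def True
      by (simp add: fun_eq_iff catprod_def hcat_lett Sr_wrd_Nil act_wrd_Nil hplus_def hsmult_def hsum_def)
  next
    case False
    define m where "m = length as'"
    have m1: "1 \<le> m" using False by (simp add: m_def Suc_le_eq)
    define T where "T = (\<lambda>i v. Lc (circ_chain circ (take i (a # as'))) (Sr circ (catprod (drop i (a # as')))) v)"
    have fT: "fsupp (Lc (circ_chain circ (take i as')) (Sr circ (catprod (drop i as'))))" for i
      using fas by (intro fsupp_Lc fsupp_chain fsupp_Sr fsupp_catprod) (auto dest: in_set_takeD in_set_dropD)
    have IH: "X = (\<lambda>v. \<Sum>i\<in>{1..m}. rvar ^ (i - 1) * Lc (circ_chain circ (take i as')) (Sr circ (catprod (drop i as'))) v)"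
      unfolding X_def m_def using Cons.IH[OF False fas] by (simp add: hsum_def hsmult_def)
    have actX: "act circ a X v = (\<Sum>i\<in>{1..m}. rvar ^ (i - 1) * T (Suc i) v)" for v
    proof -
      have "act circ a X v = (\<Sum>i\<in>{1..m}. rvar ^ (i - 1) * act circ a (Lc (circ_chain circ (take i as')) (Sr circ (catprod (drop i as')))) v)"
        unfolding IH by (rule act_second) (simp_all add: fT)
      also have "\<dots> = (\<Sum>i\<in>{1..m}. rvar ^ (i - 1) * T (Suc i) v)"
      proof (intro sum.cong refl arg_cong2[where f="(*)"])
        fix i assume "i \<in> {1..m}"
        then obtain b rest where tk: "take i as' = b # rest"
          using False by (cases "take i as'") (auto simp: m_def)
        have "act circ a (Lc (circ_chain circ (take i as')) (Sr circ (catprod (drop i as')))) =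
              Lc (circ a (circ_chain circ (take i as'))) (Sr circ (catprod (drop i as')))"
          using fas by (intro act_Lc fa fsupp_chain fsupp_Sr fsupp_catprod) (auto dest: in_set_takeD in_set_dropD)
        also have "circ a (circ_chain circ (take i as')) = circ_chain circ (take (Suc i) (a # as'))"
          using tk by simp
        finally show "act circ a (Lc (circ_chain circ (take i as')) (Sr circ (catprod (drop i as')))) v = T (Suc i) v"
          by (simp add: T_def)
      qed
      finally show ?thesis .
    qed
    have "Sr circ (catprod (a # as')) v = hsum (\<lambda>i. hsmult (rvar ^ (i - 1)) (T i)) {1..length (a # as')} v" for v
    proof -
      have "hsum (\<lambda>i. hsmult (rvar ^ (i - 1)) (T i)) {1..length (a # as')} v
          = (\<Sum>i\<in>{1..Suc m}. rvar ^ (i - 1) * T i v)"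
        by (simp add: hsum_def hsmult_def m_def)
      also have "\<dots> = rvar ^ 0 * T 1 v + (\<Sum>i\<in>{Suc 1..Suc m}. rvar ^ (i - 1) * T i v)"
        by (subst sum.atLeast_Suc_atMost) simp_all
      also have "(\<Sum>i\<in>{Suc 1..Suc m}. rvar ^ (i - 1) * T i v) = (\<Sum>i\<in>{1..m}. rvar ^ i * T (Suc i) v)"
        by (subst sum.shift_bounds_cl_Suc_ivl) simp
      also have "\<dots> = rvar * (\<Sum>i\<in>{1..m}. rvar ^ (i - 1) * T (Suc i) v)"
        unfolding sum_distrib_left
      proof (intro sum.cong refl)
        fix i :: nat assume "i \<in> {1..m}"
        then have "i = Suc (i - 1)" by simp
        then have h: "rvar ^ i = rvar * rvar ^ (i - 1)" by (metis power_Suc)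
        show "rvar ^ i * T (Suc i) v = rvar * (rvar ^ (i - 1) * T (Suc i) v)" unfolding h by (rule mult.assoc)
      qed
      also have "T 1 v = Lc a X v" by (simp add: T_def X_def)
      finally show ?thesis unfolding Sr1 by (simp add: hplus_def hsmult_def actX)
    qed
    then show ?thesis by (simp add: T_def m_def fun_eq_iff)
  qed
qed

end

theorem lemma2p2:
  fixes circ :: "('l \<Rightarrow> 'k::comm_ring_1) \<Rightarrow> ('l \<Rightarrow> 'k) \<Rightarrow> ('l \<Rightarrow> 'k)"
  assumes Qalg: "\<And>n::nat. n \<noteq> 0 \<Longrightarrow> (of_nat n :: 'k) dvd 1"
    and circ: "comm_circ circ"
  shows "(\<forall>as :: ('l \<Rightarrow> 'k) list. as \<noteq> [] \<longrightarrow> (\<forall>a\<in>set as. fsupp a) \<longrightarrow>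
            Sr circ (catprod as) =
            hsum (\<lambda>i. hsmult (rvar ^ (i - 1))
                        (hcat (lett (circ_chain circ (take i as)))
                              (Sr circ (catprod (drop i as)))))
                 {1..length as})
       \<and> (\<forall>(a :: 'l \<Rightarrow> 'k) (n::nat). n > 0 \<longrightarrow> fsupp a \<longrightarrow>
            Sr circ (catprod (replicate n a)) =
            hsum (\<lambda>i. hsmult (rvar ^ (i - 1))
                        (hcat (lett (circ_chain circ (replicate i a)))
                              (Sr circ (catprod (replicate (n - i) a)))))
                 {1..n})"
proof -
  have M: "Sr circ (catprod as) =
            hsum (\<lambda>i. hsmult (rvar ^ (i - 1))
                        (hcat (lett (circ_chain circ (take i as)))
                              (Sr circ (catprod (drop i as)))))
                 {1..length as}"
    if "as \<noteq> []" "\<forall>a\<in>set as. fsupp a" for as :: "('l \<Rightarrow> 'k) list"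
    using main[OF circ that] by (simp add: hcat_lett)
  show ?thesis
  proof (intro conjI allI impI)
    fix as :: "('l \<Rightarrow> 'k) list"
    assume "as \<noteq> []" "\<forall>a\<in>set as. fsupp a"
    then show "Sr circ (catprod as) =
            hsum (\<lambda>i. hsmult (rvar ^ (i - 1))
                        (hcat (lett (circ_chain circ (take i as)))
                              (Sr circ (catprod (drop i as)))))
                 {1..length as}" by (rule M)
  next
    fix a :: "'l \<Rightarrow> 'k" and n :: nat
    assume "n > 0" "fsupp a"
    then have "Sr circ (catprod (replicate n a)) =
            hsum (\<lambda>i. hsmult (rvar ^ (i - 1))
                        (hcat (lett (circ_chain circ (take i (replicate n a))))
                              (Sr circ (catprod (drop i (replicate n a))))))
                 {1..length (replicate n a)}"
      by (intro M) auto
    also have "\<dots> = hsum (\<lambda>i. hsmult (rvar ^ (i - 1))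
                        (hcat (lett (circ_chain circ (replicate i a)))
                              (Sr circ (catprod (replicate (n - i) a)))))
                 {1..n}"
      unfolding hsum_def by (intro ext sum.cong) (auto simp: min_def)
    finally show "Sr circ (catprod (replicate n a)) =
            hsum (\<lambda>i. hsmult (rvar ^ (i - 1))
                        (hcat (lett (circ_chain circ (replicate i a)))
                              (Sr circ (catprod (replicate (n - i) a)))))
                 {1..n}" .
  qed
qed

end
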